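(* Let $d$ be a premetric on a topological space $X$. Then (1) the regularization $\overline d$ is a premetric with closed balls on $X$; (2) if $d$ has open balls, then the semiregularization $\overline d^\circ$ is a premetric with open balls on $X$.
   Context: A premetric on $X$ is $d:X\times X\to[0,\infty)$ with $d(x,x)=0$. $B_d(x,\varepsilon)=\{y:d(x,y)<\varepsilon\}$; $d$ has open balls if every $B_d(x,\varepsilon)$ is open, closed balls if every $\{y:d(x,y)\le\varepsilon\}$ is closed. The regularization is $\overline d(x,y)=\inf\{\varepsilon>0:y\in\overline{B_d(x,\varepsilon)}\}$ and the semiregularization is $\overline d^\circ(x,y)=\inf\{\varepsilon>0:y\in B_d(x,\varepsilon)\cup\mathrm{int}\,\overline{B_d(x,\varepsilon)}\}$. *)

theory Defs
  imports "HOL-Analysis.Analysis"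
begin

definition premetric :: "'a topology \<Rightarrow> ('a \<Rightarrow> 'a \<Rightarrow> real) \<Rightarrow> bool" where
  "premetric T d \<longleftrightarrow> (\<forall>x\<in>topspace T. \<forall>y\<in>topspace T. d x y \<ge> 0) \<and> (\<forall>x\<in>topspace T. d x x = 0)"

definition pball :: "'a topology \<Rightarrow> ('a \<Rightarrow> 'a \<Rightarrow> real) \<Rightarrow> 'a \<Rightarrow> real \<Rightarrow> 'a set" where
  "pball T d x e = {y \<in> topspace T. d x y < e}"

definition pcball :: "'a topology \<Rightarrow> ('a \<Rightarrow> 'a \<Rightarrow> real) \<Rightarrow> 'a \<Rightarrow> real \<Rightarrow> 'a set" where
  "pcball T d x e = {y \<in> topspace T. d x y \<le> e}"

definition has_open_balls :: "'a topology \<Rightarrow> ('a \<Rightarrow> 'a \<Rightarrow> real) \<Rightarrow> bool" where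
  "has_open_balls T d \<longleftrightarrow> (\<forall>x\<in>topspace T. \<forall>e. openin T (pball T d x e))"

definition has_closed_balls :: "'a topology \<Rightarrow> ('a \<Rightarrow> 'a \<Rightarrow> real) \<Rightarrow> bool" where
  "has_closed_balls T d \<longleftrightarrow> (\<forall>x\<in>topspace T. \<forall>e. closedin T (pcball T d x e))"

definition regularization :: "'a topology \<Rightarrow> ('a \<Rightarrow> 'a \<Rightarrow> real) \<Rightarrow> 'a \<Rightarrow> 'a \<Rightarrow> real" where
  "regularization T d x y = Inf {e. e > 0 \<and> y \<in> T closure_of (pball T d x e)}"

definition semiregularization :: "'a topology \<Rightarrow> ('a \<Rightarrow> 'a \<Rightarrow> real) \<Rightarrow> 'a \<Rightarrow> 'a \<Rightarrow> real" where
  "semiregularization T d x y =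
     Inf {e. e > 0 \<and> y \<in> pball T d x e \<union> T interior_of (T closure_of (pball T d x e))}"

end

theory Submission
  imports Defs
begin

lemma inf_pos_less:
  fixes S :: "real set"
  assumes "S \<noteq> {}" "\<And>s. s \<in> S \<Longrightarrow> s > 0"
  shows "Inf S < e \<longleftrightarrow> (\<exists>s\<in>S. s < e)"
proof
  assume "Inf S < e" thus "\<exists>s\<in>S. s < e" using cInf_lessD assms(1) by blast
next
  assume "\<exists>s\<in>S. s < e"
  then obtain s where "s \<in> S" "s < e" by blast
  moreover have "bdd_below S" using assms(2) by (meson bdd_belowI less_eq_real_def)
  ultimately show "Inf S < e" using cInf_lower by fastforce
qed

lemma inf_pos_ge0:
  fixes S :: "real set"
  assumes "S \<noteq> {}" "\<And>s. s \<in> S \<Longrightarrow> s > 0"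
  shows "Inf S \<ge> 0"
  using assms by (meson cInf_greatest less_eq_real_def)

lemma inf_pos_zero:
  fixes S :: "real set"
  assumes "\<And>s. s > 0 \<Longrightarrow> s \<in> S" "\<And>s. s \<in> S \<Longrightarrow> s > 0"
  shows "Inf S = 0"
proof -
  have ne: "S \<noteq> {}" using assms(1)[of 1] by auto
  have "Inf S \<ge> 0" using inf_pos_ge0[OF ne assms(2)] .
  moreover have "\<not> Inf S > 0"
  proof
    assume "Inf S > 0"
    hence "Inf S / 2 \<in> S" using assms(1) by simp
    hence "Inf S < Inf S" using inf_pos_less[OF ne assms(2), of "Inf S"] \<open>Inf S > 0\<close>
      by (metis half_gt_zero less_add_same_cancel1 field_sum_of_halves)
    thus False by simp
  qed
  ultimately show ?thesis by simp
qed

lemma pball_mono: "e1 \<le> e2 \<Longrightarrow> pball T d x e1 \<subseteq> pball T d x e2"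
  unfolding pball_def by auto

lemma mem_pball_big:
  assumes "y \<in> topspace T" "e > max (d x y) 0"
  shows "y \<in> pball T d x e"
  using assms unfolding pball_def by auto

theorem proposition1p4:
  fixes T :: "'a topology" and d :: "'a \<Rightarrow> 'a \<Rightarrow> real"
  assumes "premetric T d"
  shows "(premetric T (regularization T d) \<and> has_closed_balls T (regularization T d)) \<and>
         (has_open_balls T d \<longrightarrow>
           premetric T (semiregularization T d) \<and> has_open_balls T (semiregularization T d))"
proof -
  let ?X = "topspace T"
  define S where "S x y = {e. e > 0 \<and> y \<in> T closure_of (pball T d x e)}" for x y
  define S' where "S' x y = {e. e > 0 \<and> y \<in> pball T d x e \<union> T interior_of (T closure_of (pball T d x e))}" for x y
  have rd: "regularization T d x y = Inf (S x y)" for x y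
    unfolding regularization_def S_def ..
  have sd: "semiregularization T d x y = Inf (S' x y)" for x y
    unfolding semiregularization_def S'_def ..
  have Spos: "s \<in> S x y \<Longrightarrow> s > 0" "s \<in> S' x y \<Longrightarrow> s > 0" for s x y
    unfolding S_def S'_def by auto
  have big: "y \<in> pball T d x e" if "y \<in> ?X" "e = max (d x y) 0 + 1" for x y e
    using that unfolding pball_def by auto
  have Sne: "S x y \<noteq> {}" if "y \<in> ?X" for x y
  proof -
    let ?e = "max (d x y) 0 + 1"
    have "y \<in> T closure_of pball T d x ?e"
      using big[OF that refl] closure_of_subset[of "pball T d x ?e" T]
      unfolding pball_def by auto
    hence "?e \<in> S x y" unfolding S_def by auto
    thus ?thesis by blast
  qed
  have S'ne: "S' x y \<noteq> {}" if "y \<in> ?X" for x y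
  proof -
    let ?e = "max (d x y) 0 + 1"
    have "?e \<in> S' x y" using big[OF that refl] unfolding S'_def by auto
    thus ?thesis by blast
  qed
  have d0: "d x x = 0" if "x \<in> ?X" for x using assms that unfolding premetric_def by auto
  have inball: "x \<in> pball T d x e" if "x \<in> ?X" "e > 0" for x e
    using d0 that unfolding pball_def by auto
  have P1: "premetric T (regularization T d)"
    unfolding premetric_def rd
  proof (intro conjI ballI)
    fix x y assume "x \<in> ?X" "y \<in> ?X"
    show "0 \<le> Inf (S x y)" using inf_pos_ge0[OF Sne[OF \<open>y\<in>?X\<close>] Spos(1)[of _ x y]] by blast
  next
    fix x assume x: "x \<in> ?X"
    show "Inf (S x x) = 0"
    proof (rule inf_pos_zero)
      fix s :: real assume "s > 0"
      thus "s \<in> S x x" using inball[OF x] closure_of_subset[of "pball T d x s" T]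
        unfolding S_def pball_def by auto
    qed (use Spos in auto)
  qed
  have Sup: "e2 \<in> S x y" if "e1 \<in> S x y" "e1 \<le> e2" for x y e1 e2
    using that closure_of_mono[OF pball_mono[OF that(2)], of T T d x] unfolding S_def by auto
  have C1: "has_closed_balls T (regularization T d)"
    unfolding has_closed_balls_def
  proof (intro ballI allI)
    fix x e assume x: "x \<in> ?X"
    show "closedin T (pcball T (regularization T d) x e)"
    proof (cases "e < 0")
      case True
      have "pcball T (regularization T d) x e = {}"
      proof (intro equalityI subsetI)
        fix y assume "y \<in> pcball T (regularization T d) x e"
        hence y: "y \<in> ?X" "Inf (S x y) \<le> e" unfolding pcball_def rd by auto
        have "Inf (S x y) \<ge> 0" using inf_pos_ge0[OF Sne[of y x, OF y(1)] Spos(1)[of _ x y]] .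
        thus "y \<in> {}" using y True by linarith
      qed auto
      thus ?thesis by simp
    next
      case False
      have eq: "pcball T (regularization T d) x e =
            \<Inter> ((\<lambda>e'. T closure_of pball T d x e') ` {e<..})"
      proof (intro set_eqI iffI)
        fix y assume "y \<in> pcball T (regularization T d) x e"
        hence y: "y \<in> ?X" "Inf (S x y) \<le> e" unfolding pcball_def rd by auto
        show "y \<in> \<Inter> ((\<lambda>e'. T closure_of pball T d x e') ` {e<..})"
        proof (clarsimp)
          fix e' assume "e < e'"
          hence "Inf (S x y) < e'" using y by simp
          then obtain s where "s \<in> S x y" "s < e'"
            using inf_pos_less[OF Sne[OF y(1)] Spos(1)[of _ x y]] by blast
          hence "e' \<in> S x y" using Sup by simp
          thus "y \<in> T closure_of pball T d x e'" unfolding S_def by auto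
        qed
      next
        fix y assume H: "y \<in> \<Inter> ((\<lambda>e'. T closure_of pball T d x e') ` {e<..})"
        have y: "y \<in> ?X" using H closure_of_subset_topspace
          by (metis (no_types, lifting) INT_E greaterThan_iff gt_ex in_mono)
        have "e' \<in> S x y" if "e' > e" for e'
          using H that False unfolding S_def by auto
        have "Inf (S x y) \<le> e"
        proof (rule ccontr)
          assume "\<not> Inf (S x y) \<le> e"
          then obtain e' where "e < e'" "e' < Inf (S x y)" using dense by (meson not_le)
          moreover have "(e+e')/2 \<in> S x y" using \<open>\<And>e'. e' > e \<Longrightarrow> e' \<in> S x y\<close> \<open>e < e'\<close> by simp
          ultimately have "Inf (S x y) < e'"
            using inf_pos_less[where e=e', OF Sne[of y x, OF y] Spos(1)[of _ x y]] by auto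
          hence False using \<open>e' < Inf (S x y)\<close> by simp
          thus False by simp
        qed
        thus "y \<in> pcball T (regularization T d) x e" unfolding pcball_def rd using y by auto
      qed
      show ?thesis unfolding eq by (rule closedin_Inter) auto
    qed
  qed
  have P2: "premetric T (semiregularization T d)"
    unfolding premetric_def sd
  proof (intro conjI ballI)
    fix x y assume "x \<in> ?X" "y \<in> ?X"
    show "0 \<le> Inf (S' x y)" using inf_pos_ge0[OF S'ne[OF \<open>y\<in>?X\<close>] Spos(2)[of _ x y]] by blast
  next
    fix x assume x: "x \<in> ?X"
    show "Inf (S' x x) = 0"
    proof (rule inf_pos_zero)
      fix s :: real assume "s > 0"
      thus "s \<in> S' x x" using inball[OF x] unfolding S'_def by auto
    qed (use Spos in auto)
  qed
  have O2: "has_open_balls T (semiregularization T d)" if ob: "has_open_balls T d"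
    unfolding has_open_balls_def
  proof (intro ballI allI)
    fix x e assume x: "x \<in> ?X"
    have eq: "pball T (semiregularization T d) x e =
       \<Union> ((\<lambda>e'. pball T d x e' \<union> T interior_of (T closure_of (pball T d x e'))) ` {e'. e' > 0 \<and> e' < e})"
    proof (intro set_eqI iffI)
      fix y assume "y \<in> pball T (semiregularization T d) x e"
      hence y: "y \<in> ?X" "Inf (S' x y) < e" unfolding pball_def sd by auto
      then obtain s where "s \<in> S' x y" "s < e"
        using inf_pos_less[OF S'ne[OF y(1)] Spos(2)[of _ x y]] by blast
      thus "y \<in> \<Union> ((\<lambda>e'. pball T d x e' \<union> T interior_of (T closure_of (pball T d x e'))) ` {e'. e' > 0 \<and> e' < e})"
        unfolding S'_def by auto
    next
      fix y assume "y \<in> \<Union> ((\<lambda>e'. pball T d x e' \<union> T interior_of (T closure_of (pball T d x e'))) ` {e'. e' > 0 \<and> e' < e})"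
      then obtain s where s: "s > 0" "s < e" "y \<in> pball T d x s \<union> T interior_of (T closure_of (pball T d x s))"
        by auto
      have y: "y \<in> ?X" using s(3) interior_of_subset_topspace[of T] unfolding pball_def by blast
      have "s \<in> S' x y" using s unfolding S'_def by auto
      hence "Inf (S' x y) < e" using inf_pos_less[OF S'ne[of y x, OF y] Spos(2)[of _ x y]] s by blast
      thus "y \<in> pball T (semiregularization T d) x e" unfolding pball_def sd using y by auto
    qed
    show "openin T (pball T (semiregularization T d) x e)"
      unfolding eq
    proof (rule openin_Union, clarify)
      fix e' :: real
      have "openin T (pball T d x e')" using ob x unfolding has_open_balls_def by blast
      thus "openin T (pball T d x e' \<union> T interior_of (T closure_of pball T d x e'))"
        by (intro openin_Un openin_interior_of)
    qed
  qed
  show ?thesis using P1 C1 P2 O2 by blast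
qed

end
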